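(* Let $N=\{1,\dots,n\}$ with $n\ge 2$ and $\mathcal{D}=\mathbb{R}^n_+$. A rule $R:\mathcal{D}\to\mathbb{R}^n_+$ satisfies scale invariance, downstream impartiality, upstream invariance, and equal treatment of equal upstream total inflow if and only if it is a partial compromise rule, i.e. there exists $\delta\in[0,1]$ such that for each $e\in\mathcal{D}$, $R(e)=\delta R^{NT}(e)+(1-\delta)R^{EPT}(e)$.
   Context: Agents $1,\dots,n$ are located along a linear river, lower index meaning more upstream; agent $i$ has river inflow $e_i\ge 0$, and $e=(e_1,\dots,e_n)\in\mathcal{D}=\mathbb{R}^n_+$. An allocation for $e$ is $x\in\mathbb{R}^n_+$ with $\sum_{i=1}^n x_i=\sum_{i=1}^n e_i$ and $\sum_{i=1}^k x_i\le\sum_{i=1}^k e_i$ for each $k=1,\dots,n-1$. A rule is a map $R:\mathcal{D}\to\mathbb{R}^n_+$ assigning to each $e$ an allocation $R(e)$ for $e$. No-transfer rule: $R^{NT}_i(e)=e_i$ for all $i$. Egalitarian partial-transfer rule: $R^{EPT}_i(e)=\left[1-\frac{n-i}{n-1}\right]e_i+\frac{1}{n-1}\sum_{k<i}e_k$ for all $i\in N$. Axioms: Scale invariance: for each $e\in\mathcal{D}$ and each $\gamma\in\mathbb{R}_+$, $R(\gamma e)=\gamma R(e)$. Upstream invariance: for each $e,e'\in\mathcal{D}$ such that $e_i<e'_i$ for some $i\in N$ and $e_j=e'_j$ for all $j\ne i$, we have $R_k(e)=R_k(e')$ for each $k<i$. Downstream impartiality: for each $e,e'\in\mathcal{D}$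 such that $e_i<e'_i$ for some $i\in N$ and $e_j=e'_j$ for all $j\ne i$, and for each $k,l>i$ with $e_k=e_l$, we have $R_k(e')-R_k(e)=R_l(e')-R_l(e)$. Equal treatment of equal upstream total inflow: for each $e,e'\in\mathcal{D}$ and each $i\in N$, if $e_i=e'_i$ and $\sum_{j<i}e_j=\sum_{j<i}e'_j$, then $R_i(e)=R_i(e')$. *)

theory Defs
  imports Main "HOL-Analysis.Analysis"
begin

text \<open>Agents are 1..n; an inflow profile / allocation is a function nat => real,
 whose components outside {1..n} are irrelevant. The domain D = R^n_+ is represented by
 profiles that are nonnegative on {1..n} and zero outside (canonical representatives).\<close>

definition in_domain :: "nat \<Rightarrow> (nat \<Rightarrow> real) \<Rightarrow> bool" where
  "in_domain n e \<longleftrightarrow> (\<forall>i\<in>{1..n}. 0 \<le> e i) \<and> (\<forall>i. i \<notin> {1..n} \<longrightarrow> e i = 0)"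

definition is_allocation :: "nat \<Rightarrow> (nat \<Rightarrow> real) \<Rightarrow> (nat \<Rightarrow> real) \<Rightarrow> bool" where
  "is_allocation n e x \<longleftrightarrow>
     (\<forall>i\<in>{1..n}. 0 \<le> x i) \<and>
     (\<Sum>i=1..n. x i) = (\<Sum>i=1..n. e i) \<and>
     (\<forall>k\<in>{1..n-1}. (\<Sum>i=1..k. x i) \<le> (\<Sum>i=1..k. e i))"

definition is_rule :: "nat \<Rightarrow> ((nat \<Rightarrow> real) \<Rightarrow> (nat \<Rightarrow> real)) \<Rightarrow> bool" where
  "is_rule n R \<longleftrightarrow> (\<forall>e. in_domain n e \<longrightarrow> is_allocation n e (R e))"

definition R_NT :: "nat \<Rightarrow> (nat \<Rightarrow> real) \<Rightarrow> nat \<Rightarrow> real" where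
  "R_NT n e i = e i"

definition R_EPT :: "nat \<Rightarrow> (nat \<Rightarrow> real) \<Rightarrow> nat \<Rightarrow> real" where
  "R_EPT n e i = (1 - (real n - real i) / (real n - 1)) * e i
                 + (1 / (real n - 1)) * (\<Sum>k\<in>{1..<i}. e k)"

definition scale_invariance :: "nat \<Rightarrow> ((nat \<Rightarrow> real) \<Rightarrow> (nat \<Rightarrow> real)) \<Rightarrow> bool" where
  "scale_invariance n R \<longleftrightarrow>
     (\<forall>e (\<gamma>::real). in_domain n e \<and> 0 \<le> \<gamma> \<longrightarrow>
        (\<forall>i\<in>{1..n}. R (\<lambda>j. \<gamma> * e j) i = \<gamma> * R e i))"

definition increase_at :: "nat \<Rightarrow> (nat \<Rightarrow> real) \<Rightarrow> (nat \<Rightarrow> real) \<Rightarrow> nat \<Rightarrow> bool" where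
  "increase_at n e e' i \<longleftrightarrow> i \<in> {1..n} \<and> e i < e' i \<and> (\<forall>j\<in>{1..n}. j \<noteq> i \<longrightarrow> e j = e' j)"

definition upstream_invariance :: "nat \<Rightarrow> ((nat \<Rightarrow> real) \<Rightarrow> (nat \<Rightarrow> real)) \<Rightarrow> bool" where
  "upstream_invariance n R \<longleftrightarrow>
     (\<forall>e e' i. in_domain n e \<and> in_domain n e' \<and> increase_at n e e' i \<longrightarrow>
        (\<forall>k\<in>{1..n}. k < i \<longrightarrow> R e k = R e' k))"

definition downstream_impartiality :: "nat \<Rightarrow> ((nat \<Rightarrow> real) \<Rightarrow> (nat \<Rightarrow> real)) \<Rightarrow> bool" where
  "downstream_impartiality n R \<longleftrightarrow>
     (\<forall>e e' i. in_domain n e \<and> in_domain n e' \<and> increase_at n e e' i \<longrightarrow>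
        (\<forall>k\<in>{1..n}. \<forall>l\<in>{1..n}. i < k \<and> i < l \<and> e k = e l \<longrightarrow>
            R e' k - R e k = R e' l - R e l))"

definition equal_treatment_upstream :: "nat \<Rightarrow> ((nat \<Rightarrow> real) \<Rightarrow> (nat \<Rightarrow> real)) \<Rightarrow> bool" where
  "equal_treatment_upstream n R \<longleftrightarrow>
     (\<forall>e e'. \<forall>i\<in>{1..n}. in_domain n e \<and> in_domain n e' \<and> e i = e' i \<and>
        (\<Sum>j\<in>{1..<i}. e j) = (\<Sum>j\<in>{1..<i}. e' j) \<longrightarrow> R e i = R e' i)"

definition partial_compromise :: "nat \<Rightarrow> ((nat \<Rightarrow> real) \<Rightarrow> (nat \<Rightarrow> real)) \<Rightarrow> bool" where
  "partial_compromise n R \<longleftrightarrow>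
     (\<exists>\<delta>::real. 0 \<le> \<delta> \<and> \<delta> \<le> 1 \<and>
        (\<forall>e. in_domain n e \<longrightarrow>
           (\<forall>i\<in>{1..n}. R e i = \<delta> * R_NT n e i + (1 - \<delta>) * R_EPT n e i)))"

end

theory Submission
  imports Defs
begin

lemma dom_scale: "in_domain n e \<Longrightarrow> 0 \<le> (\<gamma>::real) \<Longrightarrow> in_domain n (\<lambda>j. \<gamma> * e j)"
  by (auto simp: in_domain_def)

lemma sum_split4:
  fixes h :: "nat \<Rightarrow> real"
  assumes "2 \<le> i" "i \<le> n"
  shows "(\<Sum>j=1..n. h j) = h 1 + (\<Sum>j\<in>{2..<i}. h j) + h i + (\<Sum>j\<in>{i<..n}. h j)"
proof -
  have A: "{1..n} = insert 1 ({2..<i} \<union> insert i {i<..n})" using assms by auto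
  show ?thesis unfolding A using assms
    by (subst sum.insert, simp, simp, subst sum.union_disjoint, auto)
qed

lemma lin1: "(x::real) = d * a  +  (1-d) * (A * a  +  B * (s + t)) \<Longrightarrow> y = d * a  +  (1-d) * (A  *  a  +  B  *  s) \<Longrightarrow> x - y = (1-d) * B * t"
  by (simp add: algebra_simps)
lemma lin2: assumes "(x::real) = d * (g * a)  +  (1-d) * (A * (g * a)  +  B * (g * s))" "y = d * a  +  (1-d) * (A  *  a  +  B  *  s)" shows "x = g * y"
  unfolding assms by (simp add: algebra_simps)

lemma fin: assumes "(m::real) \<noteq> 0"
  shows "(1 - m * g) * a + (1 - (1 - m * g)) * ((1 - t / m) * a + (1 / m) * S) = (1 - t * g) * a + g * S"
proof -
  have "(1 - (1 - m * g)) * ((1 - t / m) * a + (1 / m) * S) = g * (m - t) * a + g * S"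
    using assms by (simp add: field_simps)
  then show ?thesis by (simp add: algebra_simps)
qed

lemma fwd:
  assumes n2: "2 \<le> n" and pc: "partial_compromise n R"
  shows "scale_invariance n R \<and> downstream_impartiality n R \<and> upstream_invariance n R
           \<and> equal_treatment_upstream n R"
proof -
  obtain d where d: "\<And>e i. in_domain n e \<Longrightarrow> i \<in> {1..n} \<Longrightarrow> R e i = d * e i + (1 - d) * R_EPT n e i"
    using pc unfolding partial_compromise_def R_NT_def by blast
  have F: "R e i = d * e i + (1 - d) * ((1 - (real n - real i) / (real n - 1)) * e i
                 + (1 / (real n - 1)) * (\<Sum>k\<in>{1..<i}. e k))" if "in_domain n e" "i \<in> {1..n}" for e i
    using d[OF that] unfolding R_EPT_def R_NT_def by simp
  have S: "scale_invariance n R"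
    unfolding scale_invariance_def
  proof (intro allI impI ballI)
    fix e and \<gamma>::real and i assume h: "in_domain n e \<and> 0 \<le> \<gamma>" and i: "i \<in> {1..n}"
    have sg: "(\<Sum>k\<in>{1..<i}. \<gamma> * e k) = \<gamma> * (\<Sum>k\<in>{1..<i}. e k)" by (simp add: sum_distrib_left)
    have "R (\<lambda>j. \<gamma> * e j) i = d * (\<gamma> * e i) + (1 - d) * ((1 - (real n - real i) / (real n - 1)) * (\<gamma> * e i)
                 + (1 / (real n - 1)) * (\<gamma> * (\<Sum>k\<in>{1..<i}. e k)))"
      using F[OF dom_scale[of n e \<gamma>] i] h sg by simp
    moreover have "R e i = d * e i + (1 - d) * ((1 - (real n - real i) / (real n - 1)) * e i
                 + (1 / (real n - 1)) * (\<Sum>k\<in>{1..<i}. e k))" using F[of e i] h i by simp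
    ultimately show "R (\<lambda>j. \<gamma> * e j) i = \<gamma> * R e i"
      by (rule lin2)
  qed
  have D: "downstream_impartiality n R"
    unfolding downstream_impartiality_def
  proof (intro allI impI ballI)
    fix e e' i k l assume h: "in_domain n e \<and> in_domain n e' \<and> increase_at n e e' i"
      and k: "k \<in> {1..n}" and l: "l \<in> {1..n}" and kl: "i < k \<and> i < l \<and> e k = e l"
    have inc: "i \<in> {1..n}" "\<And>j. j \<in> {1..n} \<Longrightarrow> j \<noteq> i \<Longrightarrow> e j = e' j"
      using h unfolding increase_at_def by auto
    have key: "(\<Sum>j\<in>{1..<m}. e' j) = (\<Sum>j\<in>{1..<m}. e j) + (e' i - e i)" if m: "m \<in> {1..n}" "i < m" for m
    proof -
      have iin: "i \<in> {1..<m}" using inc m by auto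
      have "(\<Sum>j\<in>{1..<m}. e' j) = e' i + (\<Sum>j\<in>{1..<m} - {i}. e' j)"
        using iin by (simp add: sum.remove)
      also have "(\<Sum>j\<in>{1..<m} - {i}. e' j) = (\<Sum>j\<in>{1..<m} - {i}. e j)"
        using inc(2) m by (intro sum.cong) auto
      also have "(\<Sum>j\<in>{1..<m}. e j) = e i + (\<Sum>j\<in>{1..<m} - {i}. e j)"
        using iin by (simp add: sum.remove)
      ultimately show ?thesis by simp
    qed
    have ek: "e' k = e k" "e' l = e l" using inc(2)[of k] inc(2)[of l] k l kl by auto
    have diff: "R e' m - R e m = (1 - d) * (1 / (real n - 1)) * (e' i - e i)"
      if m: "m \<in> {1..n}" "i < m" "e' m = e m" for m
    proof -
      have "R e' m = d * e m + (1 - d) * ((1 - (real n - real m) / (real n - 1)) * e m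
                 + (1 / (real n - 1)) * ((\<Sum>j\<in>{1..<m}. e j) + (e' i - e i)))"
        using F[of e' m] h m key[OF m(1,2)] by simp
      moreover have "R e m = d * e m + (1 - d) * ((1 - (real n - real m) / (real n - 1)) * e m
                 + (1 / (real n - 1)) * (\<Sum>j\<in>{1..<m}. e j))"
        using F[of e m] h m by simp
      ultimately show ?thesis by (rule lin1)
    qed
    show "R e' k - R e k = R e' l - R e l"
      using diff[of k] diff[of l] k l kl ek by simp
  qed
  have U: "upstream_invariance n R"
    unfolding upstream_invariance_def
  proof (intro allI impI ballI)
    fix e e' i k assume h: "in_domain n e \<and> in_domain n e' \<and> increase_at n e e' i"
      and k: "k \<in> {1..n}" and ki: "k < i"
    have inc: "\<And>j. j \<in> {1..n} \<Longrightarrow> j \<noteq> i \<Longrightarrow> e j = e' j"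
      using h unfolding increase_at_def by auto
    have "(\<Sum>j\<in>{1..<k}. e' j) = (\<Sum>j\<in>{1..<k}. e j)"
      using inc k ki by (intro sum.cong) auto
    then show "R e k = R e' k" using F[of e k] F[of e' k] h k ki inc[of k] by simp
  qed
  have E: "equal_treatment_upstream n R"
    unfolding equal_treatment_upstream_def
    using F by auto
  show ?thesis using S D U E by blast
qed


lemma bwd:
  assumes n2: "2 \<le> n" and rule: "is_rule n R"
    and S: "scale_invariance n R" and D: "downstream_impartiality n R"
    and E: "equal_treatment_upstream n R"
  shows "partial_compromise n R"
proof -
  define u where "u = (\<lambda>j::nat. if j = 1 then (1::real) else 0)"
  have du: "in_domain n u" using n2 by (auto simp: in_domain_def u_def)
  define c where "c = R u 1"
  define g where "g = R u 2"
  have Eq: "R e i = R e' i" if "in_domain n e" "in_domain n e'" "i \<in> {1..n}" "e i = e' i"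
     "(\<Sum>j\<in>{1..<i}. e j) = (\<Sum>j\<in>{1..<i}. e' j)" for e e' i
    using E that unfolding equal_treatment_upstream_def by blast
  have z: "(\<lambda>j. 0 * u j) = (\<lambda>j. 0::real)" by simp
  have dz: "in_domain n (\<lambda>j. 0::real)" by (simp add: in_domain_def)
  have R0: "R (\<lambda>j. 0) i = 0" if "i \<in> {1..n}" for i
    proof -
    have "R (\<lambda>j. 0 * u j) i = 0 * R u i" using S du that unfolding scale_invariance_def by blast
    then show ?thesis by (simp only: z mult_zero_left)
  qed
  have su: "R (\<lambda>j. s * u j) i = s * R u i" if "0 \<le> s" "i \<in> {1..n}" for s i
    using S du that unfolding scale_invariance_def by blast
  have inc: "increase_at n (\<lambda>j. 0) u 1" using n2 by (auto simp: increase_at_def u_def)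
  have Ug: "R u k = g" if "k \<in> {2..n}" for k
  proof -
    have "R u k - R (\<lambda>j. 0) k = R u 2 - R (\<lambda>j. 0) 2"
      using D dz du inc that n2 unfolding downstream_impartiality_def by auto
    then show ?thesis using R0[of k] R0[of 2] that n2 by (simp add: g_def)
  qed
  have alloc: "is_allocation n u (R u)" using rule du unfolding is_rule_def by blast
  have "(\<Sum>i=1..n. R u i) = 1"
  proof -
    have "(\<Sum>i=1..n. R u i) = (\<Sum>i=1..n. u i)" using alloc unfolding is_allocation_def by blast
    also have "\<dots> = 1" using n2 unfolding u_def by (simp add: sum.delta)
    finally show ?thesis .
  qed
  moreover have "(\<Sum>i=1..n. R u i) = c + (\<Sum>i=2..n. R u i)"
    using n2 by (subst sum.atLeast_Suc_atMost) (auto simp: c_def numeral_2_eq_2)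
  moreover have "(\<Sum>i=2..n. R u i) = (real n - 1) * g"
    using Ug n2 by (simp add: of_nat_diff)
  ultimately have cg: "c = 1 - (real n - 1) * g" by simp
  have c0: "0 \<le> c" and g0: "0 \<le> g" using alloc n2 unfolding is_allocation_def c_def g_def by auto
  have usum: "(\<Sum>k\<in>{1..<j}. s * u k) = s" if "2 \<le> j" for s j
    using that unfolding u_def by (simp add: sum.delta if_distrib cong: if_cong)
  have main: "R e i = (1 - (real n - real i) * g) * e i + g * (\<Sum>k\<in>{1..<i}. e k)"
    if de: "in_domain n e" and i: "i \<in> {1..n}" for e i
  proof (cases "i = 1")
    case True
    have e0: "0 \<le> e 1" using de n2 unfolding in_domain_def by auto
    have "R e 1 = R (\<lambda>j. e 1 * u j) 1"
      by (rule Eq[OF de dom_scale[OF du e0]]) (use n2 in \<open>auto simp: u_def\<close>)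
    also have "\<dots> = e 1 * c" using su[OF e0, of 1] n2 by (simp add: c_def)
    finally show ?thesis using True cg by (simp add: algebra_simps)
  next
    case False
    then have i2: "2 \<le> i" "i \<le> n" using i by auto
    define a where "a = e i"
    define s where "s = (\<Sum>k\<in>{1..<i}. e k)"
    have a0: "0 \<le> a" using de i unfolding in_domain_def a_def by auto
    have s0: "0 \<le> s" unfolding s_def using de i by (intro sum_nonneg) (auto simp: in_domain_def)
    define p where "p = (\<lambda>j. (if j = 1 then s else 0) + (if j = i then a else (0::real)))"
    have dp: "in_domain n p" using a0 s0 i2 unfolding in_domain_def p_def by auto
    have psum: "(\<Sum>k\<in>{1..<j}. p k) = s + (if i < j then a else 0)" if "2 \<le> j" for j
      using that i2 unfolding p_def by (simp add: sum.distrib sum.delta)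
    have pi: "p i = a" "p 1 = s" using False unfolding p_def by auto
    have Rpi: "R e i = R p i"
      by (rule Eq[OF de dp i]) (use psum[of i] i2 pi in \<open>simp_all add: a_def s_def\<close>)
    have Rp1: "R p 1 = s * c"
    proof -
      have "R p 1 = R (\<lambda>j. s * u j) 1"
        by (rule Eq[OF dp dom_scale[OF du s0]]) (use n2 pi in \<open>auto simp: u_def\<close>)
      also have "\<dots> = s * c" using su[OF s0, of 1] n2 by (simp add: c_def)
      finally show ?thesis .
    qed
    have Rpmid: "R p j = s * g" if "j \<in> {2..<i}" for j
    proof -
      have pj: "p j = 0" "s * u j = 0" using that unfolding p_def u_def by auto
      have "R p j = R (\<lambda>j. s * u j) j"
        by (rule Eq[OF dp dom_scale[OF du s0]]) (use that i2 pj psum[of j] usum[of j s] in auto)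
      also have "\<dots> = s * g" using su[OF s0, of j] Ug[of j] that i2 by simp
      finally show ?thesis .
    qed
    have as0: "0 \<le> s + a" using a0 s0 by simp
    have Rphi: "R p j = (s + a) * g" if "j \<in> {i<..n}" for j
    proof -
      have pj: "p j = 0" "(s + a) * u j = 0" using that i2 unfolding p_def u_def by auto
      have "R p j = R (\<lambda>j. (s + a) * u j) j"
        by (rule Eq[OF dp dom_scale[OF du as0]]) (use that i2 pj psum[of j] usum[of j "s + a"] in auto)
      also have "\<dots> = (s + a) * g" using su[OF as0, of j] Ug[of j] that i2 by simp
      finally show ?thesis .
    qed
    have allp: "is_allocation n p (R p)" using rule dp unfolding is_rule_def by blast
    have "(\<Sum>j=1..n. R p j) = (\<Sum>j=1..n. p j)" using allp unfolding is_allocation_def by blast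
    also have "\<dots> = s + a" using i2 unfolding p_def by (simp add: sum.distrib sum.delta)
    finally have tot: "(\<Sum>j=1..n. R p j) = s + a" .
    have m1: "(\<Sum>j\<in>{2..<i}. R p j) = (real i - 2) * (s * g)"
      using Rpmid i2 by (simp add: of_nat_diff)
    have m2: "(\<Sum>j\<in>{i<..n}. R p j) = (real n - real i) * ((s + a) * g)"
      using Rphi i2 by (simp add: of_nat_diff)
    have "R p i = s + a - s * c - (real i - 2) * (s * g) - (real n - real i) * ((s + a) * g)"
      using tot sum_split4[OF i2, of "R p"] m1 m2 Rp1 by simp
    then show ?thesis unfolding Rpi cg a_def[symmetric] s_def[symmetric]
      by (simp add: algebra_simps)
  qed
  show ?thesis unfolding partial_compromise_def
  proof (intro exI conjI allI impI ballI)
    show "0 \<le> c" by fact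
    show "c \<le> 1" using cg g0 n2 by simp
    fix e i assume de: "in_domain n e" and i: "i \<in> {1..n}"
    have n1: "real n - 1 \<noteq> 0" using n2 by simp
    show "R e i = c * R_NT n e i + (1 - c) * R_EPT n e i"
      unfolding main[OF de i] R_NT_def R_EPT_def cg using fin[OF n1, of g "e i" "real n - real i"]
      by simp
  qed
qed

theorem theorem5:
  fixes n :: nat and R :: "(nat \<Rightarrow> real) \<Rightarrow> (nat \<Rightarrow> real)"
  assumes "2 \<le> n" and "is_rule n R"
  shows "(scale_invariance n R \<and> downstream_impartiality n R \<and> upstream_invariance n R
           \<and> equal_treatment_upstream n R) \<longleftrightarrow> partial_compromise n R"
  using fwd[OF assms(1)] bwd[OF assms] by blast

end
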